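(* Let $((X_t,\sigma_t))$ be the strictly stationary AGARCH$(p,q)$ process with true parameter $\theta_0=(\alpha_0^\circ,\dots,\alpha_p^\circ,\beta_1^\circ,\dots,\beta_q^\circ,\gamma^\circ)^T$ in the interior of a compact set $K\subset(0,\infty)\times[0,\infty)^p\times B\times[-1,1]$ that equals the closure of its interior, where $B=\{(\beta_1,\dots,\beta_q)^T\in[0,1)^q:\sum_j\beta_j<1\}$; assume $\alpha_i^\circ>0$ for some $i\ge1$, $(\alpha_p^\circ,\beta_q^\circ)\ne(0,0)$, the polynomials $\sum_{i=1}^p\alpha_i^\circ z^i$ and $1-\sum_{j=1}^q\beta_j^\circ z^j$ have no common zeros, the distribution of $Z_0$ is not concentrated at two points, $\mathbb EZ_0^4<\infty$, and $\mathbb P(|Z_0|\le z)=o(z^\mu)$ as $z\downarrow0$ for some $\mu>0$. Then the components of the random vector $$\Big(1,(|X_0|-\gamma^\circ X_0)^2,\dots,(|X_{-p+1}|-\gamma^\circ X_{-p+1})^2,\sigma_0^2,\dots,\sigma_{-q+1}^2,\ -2\sum_{i=1}^p\alpha_i^\circ X_{1-i}(|X_{1-i}|-\gamma^\circ X_{1-i})\Big)$$ are linearly independent random variables, i.e. if $\xi\in\mathbb R^{p+q+2}$ and the inner product of $\xi$ with this vector is $0$ a.s., then $\xi=0$.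
   Context: $(Z_t)$ i.i.d. with $\mathbb EZ_0=0$, $\mathbb EZ_0^2=1$, $\mathcal F_t=\sigma(Z_k:k\le t)$. AGARCH$(p,q)$: $X_t=\sigma_tZ_t$, $\sigma_t^2=\alpha_0^\circ+\sum_{i=1}^p\alpha_i^\circ(|X_{t-i}|-\gamma^\circ X_{t-i})^2+\sum_{j=1}^q\beta_j^\circ\sigma_{t-j}^2$, $t\in\mathbb Z$, with $\sigma_t\ge0$ $\mathcal F_{t-1}$-measurable. The vector in the claim is the gradient with respect to $\theta=(\alpha_0,\dots,\alpha_p,\beta_1,\dots,\beta_q,\gamma)$ of $\alpha_0+\sum_i\alpha_i(|X_{1-i}|-\gamma X_{1-i})^2+\sum_j\beta_j\sigma_{1-j}^2$ at $\theta_0$. *)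

theory Defs
  imports "HOL-Probability.Probability" "HOL-Library.Landau_Symbols"
begin

text \<open>Parameter vector theta = (alpha_0,...,alpha_p,beta_1,...,beta_q,gamma) in R^(p+q+2),
  represented as a function nat => real that vanishes at indices >= p+q+2.\<close>
definition param_vec :: "nat \<Rightarrow> nat \<Rightarrow> (nat \<Rightarrow> real) \<Rightarrow> (nat \<Rightarrow> real) \<Rightarrow> real \<Rightarrow> nat \<Rightarrow> real" where
  "param_vec p q \<alpha> \<beta> \<gamma> = (\<lambda>i. if i \<le> p then \<alpha> i else if i \<le> p + q then \<beta> (i - p)
      else if i = p + q + 1 then \<gamma> else 0)"

text \<open>The coordinate space R^d, embedded in nat => real (product topology).\<close>
definition coord_space :: "nat \<Rightarrow> (nat \<Rightarrow> real) set" where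
  "coord_space d = {\<theta>. \<forall>i\<ge>d. \<theta> i = 0}"

definition AGARCH_param_set :: "nat \<Rightarrow> nat \<Rightarrow> (nat \<Rightarrow> real) set" where
  "AGARCH_param_set p q = {\<theta> \<in> coord_space (p + q + 2).
      \<theta> 0 > 0 \<and> (\<forall>i\<in>{1..p}. \<theta> i \<ge> 0)
      \<and> (\<forall>j\<in>{1..q}. 0 \<le> \<theta> (p + j) \<and> \<theta> (p + j) < 1) \<and> (\<Sum>j=1..q. \<theta> (p + j)) < 1
      \<and> -1 \<le> \<theta> (p + q + 1) \<and> \<theta> (p + q + 1) \<le> 1}"

definition past_sigma :: "'a measure \<Rightarrow> (int \<Rightarrow> 'a \<Rightarrow> real) \<Rightarrow> int \<Rightarrow> 'a measure" where
  "past_sigma M Z t = sigma (space M) (\<Union>k\<in>{..t}. {Z k -` A \<inter> space M | A. A \<in> sets borel})"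

definition strictly_stationary :: "'a measure \<Rightarrow> (int \<Rightarrow> 'a \<Rightarrow> 'b::topological_space) \<Rightarrow> bool" where
  "strictly_stationary M Y \<longleftrightarrow> (\<forall>J h. finite J \<longrightarrow>
      distr M (Pi\<^sub>M J (\<lambda>_. borel)) (\<lambda>\<omega>. \<lambda>t\<in>J. Y (t + h) \<omega>)
    = distr M (Pi\<^sub>M J (\<lambda>_. borel)) (\<lambda>\<omega>. \<lambda>t\<in>J. Y t \<omega>))"

end

theory Submission
  imports Defs "HOL-Computational_Algebra.Fundamental_Theorem_Algebra"
    "HOL-Computational_Algebra.Polynomial_Factorial" "HOL-Computational_Algebra.Field_as_Ring"
begin

lemma past_gen_sub:
  "(\<Union>k\<in>{..t}. {Z k -` A \<inter> space M | A. A \<in> sets borel}) \<subseteq> Pow (space M)"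
  by auto

lemma sets_past: "sets (past_sigma M Z t) = sigma_sets (space M) (\<Union>k\<in>{..t}. {Z k -` A \<inter> space M | A. A \<in> sets borel})"
  unfolding past_sigma_def by (rule sets_measure_of[OF past_gen_sub])

lemma space_past[simp]: "space (past_sigma M Z t) = space M"
  unfolding past_sigma_def by (rule space_measure_of[OF past_gen_sub])

lemma past_sub_M:
  assumes "\<And>t. Z t \<in> borel_measurable M"
  shows "sets (past_sigma M Z s) \<subseteq> sets M"
  unfolding sets_past
proof (rule sets.sigma_sets_subset)
  show "(\<Union>k\<in>{..s}. {Z k -` A \<inter> space M | A. A \<in> sets borel}) \<subseteq> sets M"
    using assms by (auto intro: measurable_sets)
qed

lemma past_meas_M:
  assumes "\<And>t. Z t \<in> borel_measurable M" "f \<in> borel_measurable (past_sigma M Z s)"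
  shows "f \<in> borel_measurable M"
proof (rule measurableI)
  fix A :: "'b set" assume "A \<in> sets borel"
  then have "f -` A \<inter> space (past_sigma M Z s) \<in> sets (past_sigma M Z s)"
    using assms(2) by (rule measurable_sets[rotated])
  then show "f -` A \<inter> space M \<in> sets M" using past_sub_M[where Z=Z and M=M and s=s, OF assms(1)] by auto
qed simp

lemma past_mono_sets:
  assumes "s \<le> t"
  shows "sets (past_sigma M Z s) \<subseteq> sets (past_sigma M Z t)"
  unfolding sets_past
proof (intro sigma_sets_subseteq subsetI)
  fix x assume "x \<in> (\<Union>k\<in>{..s}. {Z k -` A \<inter> space M | A. A \<in> sets borel})"
  then obtain k A where "k \<le> s" "A \<in> sets borel" "x = Z k -` A \<inter> space M" by auto
  moreover have "k \<in> {..t}" using \<open>k \<le> s\<close> assms by auto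
  ultimately show "x \<in> (\<Union>k\<in>{..t}. {Z k -` A \<inter> space M | A. A \<in> sets borel})"
    by blast
qed

lemma past_mono:
  assumes "s \<le> t" "f \<in> borel_measurable (past_sigma M Z s)"
  shows "f \<in> borel_measurable (past_sigma M Z t)"
proof (rule measurableI)
  fix A :: "'b set" assume "A \<in> sets borel"
  then have "f -` A \<inter> space (past_sigma M Z s) \<in> sets (past_sigma M Z s)"
    using assms(2) by (rule measurable_sets[rotated])
  then show "f -` A \<inter> space (past_sigma M Z t) \<in> sets (past_sigma M Z t)" using past_mono_sets[OF assms(1), of M Z] by auto
qed simp

lemma past_Z:
  assumes "k \<le> t"
  shows "Z k \<in> borel_measurable (past_sigma M Z t)"
proof (rule measurableI)
  fix A :: "real set" assume "A \<in> sets borel"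
  then have "Z k -` A \<inter> space M \<in> (\<Union>k\<in>{..t}. {Z k -` A \<inter> space M | A. A \<in> sets borel})"
    using assms by auto
  then show "Z k -` A \<inter> space (past_sigma M Z t) \<in> sets (past_sigma M Z t)"
    unfolding sets_past by auto
qed auto

context prob_space begin

lemma indep_past:
  assumes Zm: "\<And>t. Z t \<in> borel_measurable M"
    and ind: "indep_vars (\<lambda>_. borel) Z UNIV"
    and B: "B \<in> sets borel" and E: "E \<in> sets (past_sigma M Z (t - 1))"
  shows "prob (Z t -` B \<inter> space M \<inter> E) = prob (Z t -` B \<inter> space M) * prob E"
proof -
  define F where "F = (\<lambda>i. {Z i -` A \<inter> space M | A. A \<in> sets borel})"
  define I where "I = (\<lambda>b::bool. if b then {t} else {..<t})"
  have i1: "indep_sets F UNIV" using ind unfolding indep_vars_def2 F_def by auto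
  have i2: "indep_sets F (\<Union>j\<in>UNIV. I j)" by (rule indep_sets_mono_index[OF _ i1]) auto
  have stab: "Int_stable (F i)" for i
    unfolding F_def Int_stable_def
    apply auto
    apply (rule_tac x="A \<inter> Aa" in exI)
    by auto
  have disj: "disjoint_family_on I UNIV"
    unfolding disjoint_family_on_def I_def by auto
  have i3: "indep_sets (\<lambda>j. sigma_sets (space M) (\<Union>i\<in>I j. F i)) UNIV"
    by (rule indep_sets_collect_sigma[OF i2 _ disj]) (rule stab)
  have e1: "Z t -` B \<inter> space M \<in> sigma_sets (space M) (\<Union>i\<in>I True. F i)"
    using B unfolding I_def F_def by (auto intro!: sigma_sets.Basic)
  have "{..t - 1} = {..<t}" by auto
  then have e2: "E \<in> sigma_sets (space M) (\<Union>i\<in>I False. F i)"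
    using E unfolding sets_past I_def F_def by simp
  have "prob (\<Inter>j\<in>UNIV. (\<lambda>b. if b then Z t -` B \<inter> space M else E) j)
      = (\<Prod>j\<in>UNIV. prob ((\<lambda>b. if b then Z t -` B \<inter> space M else E) j))"
    by (rule indep_setsD[OF i3]) (use e1 e2 in auto)
  moreover have "(\<Inter>j\<in>UNIV. (\<lambda>b. if b then Z t -` B \<inter> space M else E) j) = Z t -` B \<inter> space M \<inter> E"
    by (auto simp: UNIV_bool)
  ultimately show ?thesis by (simp add: UNIV_bool)
qed

end

definition phi :: "real \<Rightarrow> real \<Rightarrow> real \<Rightarrow> real" where
  "phi a b z = (if z \<ge> 0 then a else b) * z\<^sup>2"

lemma phi_meas[measurable]: "phi a b \<in> borel_measurable borel"
  unfolding phi_def by measurable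

context prob_space begin

lemma zero_one:
  assumes Zm: "\<And>t. Z t \<in> borel_measurable M"
    and ind: "indep_vars (\<lambda>_. borel) Z UNIV"
    and fm: "f \<in> borel_measurable borel"
    and Wm: "W \<in> borel_measurable (past_sigma M Z (t - 1))"
    and ae: "AE \<omega> in M. f (Z t \<omega>) = W \<omega>"
    and A: "A \<in> sets borel"
  shows "prob {\<omega>\<in>space M. f (Z t \<omega>) \<in> A} = 0 \<or> prob {\<omega>\<in>space M. f (Z t \<omega>) \<in> A} = 1"
proof -
  have fA: "f -` A \<in> sets borel" using measurable_sets[OF fm A] by simp
  define E1 where "E1 = Z t -` (f -` A) \<inter> space M"
  have E1eq: "E1 = {\<omega>\<in>space M. f (Z t \<omega>) \<in> A}" unfolding E1_def by auto
  define E2 where "E2 = W -` A \<inter> space M"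
  have E2p: "E2 \<in> sets (past_sigma M Z (t - 1))"
    using measurable_sets[OF Wm A] unfolding E2_def by simp
  have E2e: "E2 \<in> events" using E2p past_sub_M[where Z=Z and M=M, OF Zm] by auto
  have E1e: "E1 \<in> events" unfolding E1_def using measurable_sets[OF Zm fA] .
  have indp: "prob (E1 \<inter> E2) = prob E1 * prob E2"
    unfolding E1_def by (rule indep_past[OF Zm ind fA E2p])
  from ae have ae1: "AE \<omega> in M. \<omega> \<in> E1 \<inter> E2 \<longleftrightarrow> \<omega> \<in> E1"
    by eventually_elim (auto simp: E1_def E2_def)
  from ae have ae2: "AE \<omega> in M. \<omega> \<in> E2 \<longleftrightarrow> \<omega> \<in> E1"
    by eventually_elim (auto simp: E1_def E2_def)
  have "prob (E1 \<inter> E2) = prob E1"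
    by (rule measure_eq_AE[OF ae1]) (use E1e E2e in auto)
  moreover have "prob E2 = prob E1"
    by (rule measure_eq_AE[OF ae2]) (use E1e E2e in auto)
  ultimately have "prob E1 = prob E1 * prob E1" using indp by simp
  then have "prob E1 = 0 \<or> prob E1 = 1"
    by (metis mult_cancel_left1)
  then show ?thesis using E1eq by simp
qed

lemma transfer:
  assumes Zm: "\<And>t. Z t \<in> borel_measurable M"
    and ident: "distr M borel (Z t) = distr M borel (Z 0)"
    and fm: "f \<in> borel_measurable borel"
    and A: "A \<in> sets borel"
  shows "prob {\<omega>\<in>space M. f (Z t \<omega>) \<in> A} = prob {\<omega>\<in>space M. f (Z 0 \<omega>) \<in> A}"
proof -
  have fA: "f -` A \<in> sets borel" using measurable_sets[OF fm A] by simp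
  have "prob {\<omega>\<in>space M. f (Z t \<omega>) \<in> A} = measure (distr M borel (Z t)) (f -` A)"
    by (subst measure_distr[OF Zm fA]) (auto intro: arg_cong[where f=prob])
  also have "\<dots> = measure (distr M borel (Z 0)) (f -` A)" using ident by simp
  also have "\<dots> = prob {\<omega>\<in>space M. f (Z 0 \<omega>) \<in> A}"
    by (subst measure_distr[OF Zm fA]) (auto intro: arg_cong[where f=prob])
  finally show ?thesis .
qed

lemma const_of_01:
  fixes V :: "'a \<Rightarrow> real"
  assumes Vm: "V \<in> borel_measurable M" and Vi: "integrable M V"
    and zo: "\<And>A. A \<in> sets borel \<Longrightarrow> prob {\<omega>\<in>space M. V \<omega> \<in> A} = 0 \<or> prob {\<omega>\<in>space M. V \<omega> \<in> A} = 1"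
  shows "\<exists>c. AE \<omega> in M. V \<omega> = c"
proof -
  define c where "c = expectation V"
  have l: "AE \<omega> in M. \<not> V \<omega> < c"
  proof -
    have ev: "{\<omega>\<in>space M. V \<omega> \<in> {..<c}} \<in> events" using Vm by measurable
    have "prob {\<omega>\<in>space M. V \<omega> \<in> {..<c}} = 0 \<or> prob {\<omega>\<in>space M. V \<omega> \<in> {..<c}} = 1"
      by (rule zo) simp
    then show ?thesis
    proof
      assume "prob {\<omega>\<in>space M. V \<omega> \<in> {..<c}} = 0"
      then show ?thesis using prob_eq_0[OF ev] by (auto elim!: AE_mp intro!: AE_I2)
    next
      assume "prob {\<omega>\<in>space M. V \<omega> \<in> {..<c}} = 1"
      then have "AE \<omega> in M. V \<omega> < c" using prob_eq_1[OF ev] by (auto elim!: AE_mp intro!: AE_I2)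
      then have "expectation V < expectation (\<lambda>_. c)"
        by (intro integral_less_AE_space[OF Vi]) (auto simp: emeasure_space_1)
      then show ?thesis unfolding c_def by (simp add: prob_space)
    qed
  qed
  have r: "AE \<omega> in M. \<not> V \<omega> > c"
  proof -
    have ev: "{\<omega>\<in>space M. V \<omega> \<in> {c<..}} \<in> events" using Vm by measurable
    have "prob {\<omega>\<in>space M. V \<omega> \<in> {c<..}} = 0 \<or> prob {\<omega>\<in>space M. V \<omega> \<in> {c<..}} = 1"
      by (rule zo) simp
    then show ?thesis
    proof
      assume "prob {\<omega>\<in>space M. V \<omega> \<in> {c<..}} = 0"
      then show ?thesis using prob_eq_0[OF ev] by (auto elim!: AE_mp intro!: AE_I2)
    next
      assume "prob {\<omega>\<in>space M. V \<omega> \<in> {c<..}} = 1"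
      then have "AE \<omega> in M. c < V \<omega>" using prob_eq_1[OF ev] by (auto elim!: AE_mp intro!: AE_I2)
      then have "expectation (\<lambda>_. c) < expectation V"
        by (intro integral_less_AE_space[OF _ Vi]) (auto simp: emeasure_space_1)
      then show ?thesis unfolding c_def by (simp add: prob_space)
    qed
  qed
  from l r have "AE \<omega> in M. V \<omega> = c" by eventually_elim auto
  then show ?thesis by blast
qed

end

context prob_space begin

lemma not_AE_nonpos:
  fixes Z0 :: "'a \<Rightarrow> real"
  assumes Zm: "Z0 \<in> borel_measurable M" and Zi: "integrable M Z0" and Zmean: "expectation Z0 = 0"
    and Zi2: "integrable M (\<lambda>\<omega>. (Z0 \<omega>)\<^sup>2)" and Zvar: "expectation (\<lambda>\<omega>. (Z0 \<omega>)\<^sup>2) = 1"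
  shows "\<not> (AE \<omega> in M. Z0 \<omega> \<le> 0)"
proof
  assume ae: "AE \<omega> in M. Z0 \<omega> \<le> 0"
  have "integral\<^sup>L M (\<lambda>\<omega>. - Z0 \<omega>) = 0 \<longleftrightarrow> (AE \<omega> in M. - Z0 \<omega> = 0)"
    by (rule integral_nonneg_eq_0_iff_AE) (use Zi ae in \<open>auto elim!: AE_mp\<close>)
  then have "AE \<omega> in M. Z0 \<omega> = 0" using Zmean by simp
  then have "AE \<omega> in M. (Z0 \<omega>)\<^sup>2 = 0" by eventually_elim simp
  then have "expectation (\<lambda>\<omega>. (Z0 \<omega>)\<^sup>2) = expectation (\<lambda>_. 0::real)"
    by (intro integral_cong_AE) (use Zm in auto)
  then show False using Zvar by simp
qed

lemma not_AE_nonneg: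
  fixes Z0 :: "'a \<Rightarrow> real"
  assumes Zm: "Z0 \<in> borel_measurable M" and Zi: "integrable M Z0" and Zmean: "expectation Z0 = 0"
    and Zi2: "integrable M (\<lambda>\<omega>. (Z0 \<omega>)\<^sup>2)" and Zvar: "expectation (\<lambda>\<omega>. (Z0 \<omega>)\<^sup>2) = 1"
  shows "\<not> (AE \<omega> in M. Z0 \<omega> \<ge> 0)"
proof -
  have "\<not> (AE \<omega> in M. - Z0 \<omega> \<le> 0)"
    by (rule not_AE_nonpos) (use Zm Zi Zmean Zi2 Zvar in auto)
  then show ?thesis by simp
qed

lemma ab_zero:
  fixes Z0 :: "'a \<Rightarrow> real"
  assumes Zm: "Z0 \<in> borel_measurable M" and Zi: "integrable M Z0" and Zmean: "expectation Z0 = 0"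
    and Zi2: "integrable M (\<lambda>\<omega>. (Z0 \<omega>)\<^sup>2)" and Zvar: "expectation (\<lambda>\<omega>. (Z0 \<omega>)\<^sup>2) = 1"
    and ntp: "\<not> (\<exists>a b. measure M {\<omega> \<in> space M. Z0 \<omega> = a \<or> Z0 \<omega> = b} = 1)"
    and ae: "AE \<omega> in M. phi a b (Z0 \<omega>) = c"
  shows "a = 0 \<and> b = 0"
proof (cases "c = 0")
  case False
  have "AE \<omega> in M. Z0 \<omega> = sqrt (c / a) \<or> Z0 \<omega> = - sqrt (c / b)"
    using ae
  proof eventually_elim
    case (elim \<omega>)
    show ?case
    proof (cases "Z0 \<omega> \<ge> 0")
      case True
      then have "a * (Z0 \<omega>)\<^sup>2 = c" using elim by (simp add: phi_def)
      then have "a \<noteq> 0" using False by auto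
      then have "(Z0 \<omega>)\<^sup>2 = c / a" using \<open>a * (Z0 \<omega>)\<^sup>2 = c\<close> by (auto simp: field_simps)
      then have "Z0 \<omega> = sqrt (c / a)" using True by (metis real_sqrt_abs abs_of_nonneg)
      then show ?thesis by simp
    next
      case F: False
      then have "b * (Z0 \<omega>)\<^sup>2 = c" using elim by (simp add: phi_def)
      then have "b \<noteq> 0" using False by auto
      then have "(Z0 \<omega>)\<^sup>2 = c / b" using \<open>b * (Z0 \<omega>)\<^sup>2 = c\<close> by (auto simp: field_simps)
      then have "- Z0 \<omega> = sqrt (c / b)" using F by (metis real_sqrt_abs abs_of_neg not_le)
      then show ?thesis by simp
    qed
  qed
  moreover have "{\<omega> \<in> space M. Z0 \<omega> = sqrt (c / a) \<or> Z0 \<omega> = - sqrt (c / b)} \<in> events"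
    using Zm by measurable
  ultimately have "measure M {\<omega> \<in> space M. Z0 \<omega> = sqrt (c / a) \<or> Z0 \<omega> = - sqrt (c / b)} = 1"
    using prob_eq_1 by (simp add: AE_iff_measurable)
  then show ?thesis using ntp by blast
next
  case True
  have "a = 0"
  proof (rule ccontr)
    assume "a \<noteq> 0"
    from ae have "AE \<omega> in M. Z0 \<omega> \<le> 0"
      by eventually_elim (use True \<open>a \<noteq> 0\<close> in \<open>auto simp: phi_def split: if_splits\<close>)
    then show False using not_AE_nonpos[OF Zm Zi Zmean Zi2 Zvar] by simp
  qed
  moreover have "b = 0"
  proof (rule ccontr)
    assume "b \<noteq> 0"
    from ae have "AE \<omega> in M. Z0 \<omega> \<ge> 0"
      by eventually_elim (use True \<open>b \<noteq> 0\<close> in \<open>auto simp: phi_def split: if_splits\<close>)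
    then show False using not_AE_nonneg[OF Zm Zi Zmean Zi2 Zvar] by simp
  qed
  ultimately show ?thesis by simp
qed

lemma master:
  assumes Zm: "\<And>t. Z t \<in> borel_measurable M"
    and ind: "indep_vars (\<lambda>_. borel) Z UNIV"
    and ident: "\<And>t. distr M borel (Z t) = distr M borel (Z 0)"
    and Zi: "integrable M (Z 0)" and Zmean: "expectation (Z 0) = 0"
    and Zi2: "integrable M (\<lambda>\<omega>. (Z 0 \<omega>)\<^sup>2)" and Zvar: "expectation (\<lambda>\<omega>. (Z 0 \<omega>)\<^sup>2) = 1"
    and ntp: "\<not> (\<exists>a b. measure M {\<omega> \<in> space M. Z 0 \<omega> = a \<or> Z 0 \<omega> = b} = 1)"
    and Sm: "S \<in> borel_measurable (past_sigma M Z (t - 1))"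
    and Rm: "R \<in> borel_measurable (past_sigma M Z (t - 1))"
    and Spos: "\<And>\<omega>. \<omega> \<in> space M \<Longrightarrow> S \<omega> > 0"
    and ae: "AE \<omega> in M. S \<omega> * phi a b (Z t \<omega>) + R \<omega> = 0"
  shows "a = 0 \<and> b = 0"
proof -
  define W where "W = (\<lambda>\<omega>. - R \<omega> / S \<omega>)"
  have Wm: "W \<in> borel_measurable (past_sigma M Z (t - 1))" unfolding W_def using Sm Rm by measurable
  have aeW: "AE \<omega> in M. phi a b (Z t \<omega>) = W \<omega>"
    using ae
  proof (rule AE_mp[OF _ AE_I2[rotated]])
    fix \<omega> assume "\<omega> \<in> space M"
    then have "S \<omega> > 0" by (rule Spos)
    then show "S \<omega> * phi a b (Z t \<omega>) + R \<omega> = 0 \<longrightarrow> phi a b (Z t \<omega>) = W \<omega>"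
      unfolding W_def by (auto simp: field_simps)
  qed
  have zo: "prob {\<omega>\<in>space M. phi a b (Z 0 \<omega>) \<in> A} = 0 \<or> prob {\<omega>\<in>space M. phi a b (Z 0 \<omega>) \<in> A} = 1"
    if A: "A \<in> sets borel" for A
    using zero_one[OF Zm ind phi_meas Wm aeW A] transfer[where Z=Z and t=t, OF Zm ident phi_meas A] by simp
  have Vm: "(\<lambda>\<omega>. phi a b (Z 0 \<omega>)) \<in> borel_measurable M" using Zm by measurable
  have Vi: "integrable M (\<lambda>\<omega>. phi a b (Z 0 \<omega>))"
  proof (rule Bochner_Integration.integrable_bound[OF _ Vm])
    show "integrable M (\<lambda>\<omega>. (\<bar>a\<bar> + \<bar>b\<bar>) * (Z 0 \<omega>)\<^sup>2)" using Zi2 by simp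
    show "AE \<omega> in M. norm (phi a b (Z 0 \<omega>)) \<le> norm ((\<bar>a\<bar> + \<bar>b\<bar>) * (Z 0 \<omega>)\<^sup>2)"
      by (intro AE_I2) (auto simp: phi_def abs_mult intro!: mult_right_mono)
  qed
  obtain c where "AE \<omega> in M. phi a b (Z 0 \<omega>) = c"
    using const_of_01[OF Vm Vi zo] by blast
  then show ?thesis using ab_zero[OF Zm Zi Zmean Zi2 Zvar ntp] by blast
qed

end

abbreviation CP :: "real poly \<Rightarrow> complex poly" where "CP \<equiv> map_poly complex_of_real"

lemma coeff_CP[simp]: "coeff (CP p) n = complex_of_real (coeff p n)"
  by (simp add: coeff_map_poly)

lemma CP_add: "CP (p + q) = CP p + CP q"
  by (simp add: poly_eq_iff)

lemma CP_mult: "CP (p * q) = CP p * CP q"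
  by (simp add: poly_eq_iff coeff_mult)

lemma CP_1: "CP 1 = 1"
  by (simp add: poly_eq_iff coeff_1)

lemma CP_diff: "CP (p - q) = CP p - CP q"
  by (simp add: poly_eq_iff)

lemma CP_eq_0: "CP p = 0 \<longleftrightarrow> p = 0"
  by (simp add: poly_eq_iff)

definition Apoly :: "(nat \<Rightarrow> real) \<Rightarrow> nat \<Rightarrow> real poly" where
  "Apoly a n = (\<Sum>i=1..n. monom (a i) i)"

lemma coeff_Apoly: "coeff (Apoly a n) k = (if 1 \<le> k \<and> k \<le> n then a k else 0)"
  unfolding Apoly_def coeff_sum coeff_monom
  by (auto simp: sum.delta)

lemma poly_CP_Apoly: "poly (CP (Apoly a n)) z = (\<Sum>i=1..n. complex_of_real (a i) * z ^ i)"
proof -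
  have "CP (Apoly a n) = (\<Sum>i=1..n. monom (complex_of_real (a i)) i)"
    by (simp add: poly_eq_iff coeff_Apoly coeff_sum coeff_monom sum.delta)
  then show ?thesis by (simp add: poly_sum poly_monom)
qed

lemma poly_final:
  fixes x y :: "real poly" and \<alpha> \<beta> :: "nat \<Rightarrow> real" and p q :: nat
  assumes pq: "p \<ge> 1" "q \<ge> 1"
    and coprime: "\<not> (\<exists>z::complex. (\<Sum>i=1..p. complex_of_real (\<alpha> i) * z ^ i) = 0
                              \<and> 1 - (\<Sum>j=1..q. complex_of_real (\<beta> j) * z ^ j) = 0)"
    and last: "(\<alpha> p, \<beta> q) \<noteq> (0, 0)"
    and x0: "coeff x 0 = 0" and xp: "\<forall>i>p. coeff x i = 0"
    and y0: "coeff y 0 = 0" and yq: "\<forall>j>q. coeff y j = 0"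
    and F: "x * (1 - Apoly \<beta> q) + y * Apoly \<alpha> p = 0"
  shows "x = 0 \<and> y = 0"
proof -
  define AA where "AA = CP (Apoly \<alpha> p)"
  define BB where "BB = 1 - CP (Apoly \<beta> q)"
  define X where "X = CP x"
  define Y where "Y = CP y"
  have FF: "X * BB + Y * AA = 0"
    using arg_cong[OF F, of CP] unfolding AA_def BB_def X_def Y_def
    by (simp add: CP_add CP_mult CP_diff CP_1)
  have polyA: "poly AA z = (\<Sum>i=1..p. complex_of_real (\<alpha> i) * z ^ i)" for z
    unfolding AA_def by (rule poly_CP_Apoly)
  have polyB: "poly BB z = 1 - (\<Sum>j=1..q. complex_of_real (\<beta> j) * z ^ j)" for z
    unfolding BB_def by (simp add: poly_CP_Apoly)
  have cA: "coeff AA k = (if 1 \<le> k \<and> k \<le> p then complex_of_real (\<alpha> k) else 0)" for k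
    unfolding AA_def by (simp add: coeff_Apoly)
  have cB: "coeff BB k = (if k = 0 then 1 else if k \<le> q then - complex_of_real (\<beta> k) else 0)" for k
    unfolding BB_def by (auto simp: coeff_Apoly coeff_1)
  have BB0: "BB \<noteq> 0" using cB[of 0] by auto
  have cop: "coprime AA BB"
  proof (rule coprimeI)
    fix c assume cA': "c dvd AA" and cB': "c dvd BB"
    have "c \<noteq> 0" using cB' BB0 by auto
    show "is_unit c"
    proof (rule ccontr)
      assume "\<not> is_unit c"
      then have "degree c \<noteq> 0" using is_unit_iff_degree[OF \<open>c \<noteq> 0\<close>] by simp
      then have "\<not> (\<exists>a l. a \<noteq> 0 \<and> l = 0 \<and> c = pCons a l)" by auto
      then obtain z where z: "poly c z = 0" using fundamental_theorem_of_algebra_alt by blast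
      have "poly AA z = 0" using cA' z by (auto elim!: dvdE)
      moreover have "poly BB z = 0" using cB' z by (auto elim!: dvdE)
      ultimately show False using coprime polyA polyB by metis
    qed
  qed
  have X0: "coeff X 0 = 0" using x0 by (simp add: X_def)
  have Y0: "coeff Y 0 = 0" using y0 by (simp add: Y_def)
  have Xp: "degree X \<le> p" using xp by (intro degree_le) (simp add: X_def)
  have Yq: "degree Y \<le> q" using yq by (intro degree_le) (simp add: Y_def)
  have "X = 0 \<and> Y = 0"
  proof (cases "\<beta> q = 0")
    case False
    have dB: "degree BB = q"
    proof (rule antisym)
      show "degree BB \<le> q" using cB by (intro degree_le) auto
      show "q \<le> degree BB" using cB[of q] pq False by (intro le_degree) auto
    qed
    have "BB dvd Y * AA" using FF by (metis add_eq_0_iff dvd_minus_iff dvd_triv_right)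
    then have "BB dvd Y" using coprime_dvd_mult_left_iff[of BB AA Y] cop
      by (simp add: coprime_commute)
    then obtain k where k: "Y = BB * k" by (auto elim: dvdE)
    have "k = 0"
    proof (rule ccontr)
      assume "k \<noteq> 0"
      have "coeff k 0 = 0" using Y0 k cB[of 0] by (simp add: coeff_mult_0)
      then have "degree k \<noteq> 0" using \<open>k \<noteq> 0\<close> by (metis degree_0_id pCons_0_0)
      then have "degree Y > q" using k dB degree_mult_eq[OF BB0 \<open>k \<noteq> 0\<close>] by simp
      then show False using Yq by simp
    qed
    then have "Y = 0" using k by simp
    then have "X * BB = 0" using FF by simp
    then have "X = 0" using BB0 by simp
    then show ?thesis using \<open>Y = 0\<close> by simp
  next
    case True
    then have "\<alpha> p \<noteq> 0" using last by auto
    have AA0: "AA \<noteq> 0"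
    proof
      assume "AA = 0"
      then have "coeff AA p = 0" by simp
      then show False using cA[of p] pq \<open>\<alpha> p \<noteq> 0\<close> by simp
    qed
    have dA: "degree AA = p"
    proof (rule antisym)
      show "degree AA \<le> p" using cA by (intro degree_le) auto
      show "p \<le> degree AA" using cA[of p] pq \<open>\<alpha> p \<noteq> 0\<close> by (intro le_degree) auto
    qed
    have "AA dvd X * BB" using FF by (metis add_eq_0_iff dvd_minus_iff dvd_triv_right)
    then have "AA dvd X" using coprime_dvd_mult_left_iff[of AA BB X] cop by simp
    then obtain k where k: "X = AA * k" by (auto elim: dvdE)
    have "AA * (k * BB + Y) = 0" using FF k by (simp add: algebra_simps)
    then have Yk: "Y = - k * BB" using AA0 by (simp add: eq_neg_iff_add_eq_0 add.commute)
    have "k = 0"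
    proof (rule ccontr)
      assume "k \<noteq> 0"
      have "coeff k 0 = 0" using Y0 Yk cB[of 0] by (simp add: coeff_mult_0)
      then have "degree k \<noteq> 0" using \<open>k \<noteq> 0\<close> by (metis degree_0_id pCons_0_0)
      then have "degree X > p" using k dA degree_mult_eq[OF AA0 \<open>k \<noteq> 0\<close>] by simp
      then show False using Xp by simp
    qed
    then show ?thesis using k Yk by simp
  qed
  then show ?thesis unfolding X_def Y_def by (simp add: CP_eq_0)
qed

lemma sum_shift1:
  fixes f :: "nat \<Rightarrow> real"
  shows "(\<Sum>i=1..n. f (Suc i)) + f 1 = (\<Sum>i=1..n. f i) + f (Suc n)"
  by (induction n) (auto simp: sum.atLeast_Suc_atMost_Suc_shift)

lemma phi_smult: "k * phi a b z = phi (k * a) (k * b) z"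
  by (simp add: phi_def)

lemma phi_add: "phi a b z + phi a' b' z = phi (a + a') (b + b') z"
  by (simp add: phi_def algebra_simps)

lemma shift2x:
  fixes x :: "real poly"
  assumes "coeff x 0 = 0" "coeff x 1 = 0"
  shows "[:0,1:] * pCons 0 (poly_shift 2 x) = x"
  using assms by (auto simp: poly_eq_iff coeff_pCons coeff_poly_shift numeral_2_eq_2 split: nat.split)

lemma shift2y:
  fixes y :: "real poly"
  assumes "coeff y 0 = 0"
  shows "[:0,1:] * pCons 0 (poly_shift 2 y) = y - smult (coeff y 1) [:0,1:]"
  using assms by (auto simp: poly_eq_iff coeff_pCons coeff_poly_shift numeral_2_eq_2 split: nat.split)

lemma poly_ident:
  fixes x y x' y' A Bm z :: "real poly"
  assumes a1: "z * x' = x + smult k (z * A)" and a2: "z * y' = y - smult k z + smult k (z * Bm)"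
  shows "z * (x' * (1 - Bm) + y' * A) = x * (1 - Bm) + y * A"
proof -
  have sm: "smult k r = [:k:] * r" for r :: "real poly" by simp
  note assms = a1[unfolded sm] a2[unfolded sm]
  have "z * (x' * (1 - Bm) + y' * A) = (z * x') * (1 - Bm) + (z * y') * A"
    by (simp add: algebra_simps)
  also have "\<dots> = (x + [:k:] * (z * A)) * (1 - Bm) + (y - [:k:] * z + [:k:] * (z * Bm)) * A"
    using assms by simp
  also have "\<dots> = x * (1 - Bm) + y * A"
    by (simp add: algebra_simps smult_diff_right)
  finally show ?thesis .
qed

definition Fp :: "(nat \<Rightarrow> real) \<Rightarrow> (nat \<Rightarrow> real) \<Rightarrow> nat \<Rightarrow> nat \<Rightarrow> real poly \<Rightarrow> real poly \<Rightarrow> real poly" where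
  "Fp \<alpha> \<beta> p q x y = x * (1 - Apoly \<beta> q) + y * Apoly \<alpha> p"

locale agarch = prob_space M for M :: "'a measure" +
  fixes Z X \<sigma> :: "int \<Rightarrow> 'a \<Rightarrow> real" and p q :: nat and \<alpha> \<beta> :: "nat \<Rightarrow> real" and \<gamma> :: real
  assumes Zm: "\<And>t. Z t \<in> borel_measurable M"
    and ind: "indep_vars (\<lambda>_. borel) Z UNIV"
    and ident: "\<And>t. distr M borel (Z t) = distr M borel (Z 0)"
    and Zi: "integrable M (Z 0)" and Zmean: "expectation (Z 0) = 0"
    and Zi2: "integrable M (\<lambda>\<omega>. (Z 0 \<omega>)\<^sup>2)" and Zvar: "expectation (\<lambda>\<omega>. (Z 0 \<omega>)\<^sup>2) = 1"
    and ntp: "\<not> (\<exists>a b. measure M {\<omega> \<in> space M. Z 0 \<omega> = a \<or> Z 0 \<omega> = b} = 1)"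
    and pq: "p \<ge> 1" "q \<ge> 1"
    and \<sigma>_nonneg: "\<And>t \<omega>. \<omega> \<in> space M \<Longrightarrow> \<sigma> t \<omega> \<ge> 0"
    and \<sigma>_adapted: "\<And>t. \<sigma> t \<in> borel_measurable (past_sigma M Z (t - 1))"
    and X_def: "\<And>t \<omega>. \<omega> \<in> space M \<Longrightarrow> X t \<omega> = \<sigma> t \<omega> * Z t \<omega>"
    and recursion: "\<And>t \<omega>. \<omega> \<in> space M \<Longrightarrow>
        (\<sigma> t \<omega>)\<^sup>2 = \<alpha> 0 + (\<Sum>i=1..p. \<alpha> i * (\<bar>X (t - int i) \<omega>\<bar> - \<gamma> * X (t - int i) \<omega>)\<^sup>2)
                     + (\<Sum>j=1..q. \<beta> j * (\<sigma> (t - int j) \<omega>)\<^sup>2)"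
    and \<alpha>0: "\<alpha> 0 > 0" and \<alpha>nn: "\<And>i. 1 \<le> i \<Longrightarrow> i \<le> p \<Longrightarrow> \<alpha> i \<ge> 0"
    and \<beta>nn: "\<And>j. 1 \<le> j \<Longrightarrow> j \<le> q \<Longrightarrow> \<beta> j \<ge> 0"
    and \<gamma>1: "-1 < \<gamma>" and \<gamma>2: "\<gamma> < 1"
begin

definition ee :: "int \<Rightarrow> 'a \<Rightarrow> real" where
  "ee t \<omega> = \<bar>X t \<omega>\<bar> - \<gamma> * X t \<omega>"

lemma sig2_ge: "\<omega> \<in> space M \<Longrightarrow> \<alpha> 0 \<le> (\<sigma> t \<omega>)\<^sup>2"
proof -
  assume w: "\<omega> \<in> space M"
  have "0 \<le> (\<Sum>i=1..p. \<alpha> i * (\<bar>X (t - int i) \<omega>\<bar> - \<gamma> * X (t - int i) \<omega>)\<^sup>2)"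
    by (intro sum_nonneg mult_nonneg_nonneg) (auto intro: \<alpha>nn)
  moreover have "0 \<le> (\<Sum>j=1..q. \<beta> j * (\<sigma> (t - int j) \<omega>)\<^sup>2)"
    by (intro sum_nonneg mult_nonneg_nonneg) (auto intro: \<beta>nn)
  ultimately show ?thesis using recursion[OF w, of t] by linarith
qed

lemma sig2_pos: "\<omega> \<in> space M \<Longrightarrow> (\<sigma> t \<omega>)\<^sup>2 > 0"
  using sig2_ge[of \<omega> t] \<alpha>0 by linarith

lemma ee_sq: "\<omega> \<in> space M \<Longrightarrow> (ee t \<omega>)\<^sup>2 = (\<sigma> t \<omega>)\<^sup>2 * phi ((1-\<gamma>)\<^sup>2) ((1+\<gamma>)\<^sup>2) (Z t \<omega>)"
  using \<sigma>_nonneg[of \<omega> t]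
  by (auto simp: ee_def X_def phi_def abs_mult power2_eq_square algebra_simps)

lemma X_ee: "\<omega> \<in> space M \<Longrightarrow> X t \<omega> * ee t \<omega> = (\<sigma> t \<omega>)\<^sup>2 * phi (1-\<gamma>) (-(1+\<gamma>)) (Z t \<omega>)"
  using \<sigma>_nonneg[of \<omega> t]
  by (auto simp: ee_def X_def phi_def abs_mult power2_eq_square algebra_simps)

lemma meas_sigma: "k \<le> m + 1 \<Longrightarrow> \<sigma> k \<in> borel_measurable (past_sigma M Z m)"
  by (rule past_mono[OF _ \<sigma>_adapted]) simp

lemma meas_X: "k \<le> m \<Longrightarrow> X k \<in> borel_measurable (past_sigma M Z m)"
proof -
  assume km: "k \<le> m"
  have "(\<lambda>\<omega>. \<sigma> k \<omega> * Z k \<omega>) \<in> borel_measurable (past_sigma M Z m)"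
    using meas_sigma[of k m] past_Z[OF km, of Z M] km by (intro borel_measurable_times) auto
  then show ?thesis
    by (rule measurable_cong[THEN iffD1, rotated]) (simp add: X_def)
qed

lemma meas_ee: "k \<le> m \<Longrightarrow> ee k \<in> borel_measurable (past_sigma M Z m)"
  unfolding ee_def using meas_X[of k m] by measurable

definition Rel :: "int \<Rightarrow> real \<Rightarrow> real poly \<Rightarrow> real poly \<Rightarrow> bool" where
  "Rel s c x y \<longleftrightarrow> (AE \<omega> in M. c + (\<Sum>i=1..p. coeff x i * (ee (s - int i) \<omega>)\<^sup>2)
      + (\<Sum>j=1..q. coeff y j * (\<sigma> (s - int j) \<omega>)\<^sup>2) = 0)"

definition Inv :: "real poly \<Rightarrow> real poly \<Rightarrow> bool" where
  "Inv x y \<longleftrightarrow> coeff x 0 = 0 \<and> (\<forall>i>p. coeff x i = 0) \<and> coeff y 0 = 0 \<and> (\<forall>j>q. coeff y j = 0)"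

lemma master_here:
  assumes Rm: "R \<in> borel_measurable (past_sigma M Z (t - 1))"
    and ae: "AE \<omega> in M. (\<sigma> t \<omega>)\<^sup>2 * phi a b (Z t \<omega>) + R \<omega> = 0"
  shows "a = 0 \<and> b = 0"
proof (rule master[OF Zm ind ident Zi Zmean Zi2 Zvar ntp _ Rm _ ae])
  show "(\<lambda>\<omega>. (\<sigma> t \<omega>)\<^sup>2) \<in> borel_measurable (past_sigma M Z (t - 1))"
    using \<sigma>_adapted[of t] by measurable
  show "\<And>\<omega>. \<omega> \<in> space M \<Longrightarrow> 0 < (\<sigma> t \<omega>)\<^sup>2" by (rule sig2_pos)
qed

lemma step_x1:
  assumes rel: "Rel s c x y"
  shows "coeff x 1 = 0"
proof -
  define R where "R = (\<lambda>\<omega>. c + (\<Sum>i=2..p. coeff x i * (ee (s - int i) \<omega>)\<^sup>2)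
      + (\<Sum>j=1..q. coeff y j * (\<sigma> (s - int j) \<omega>)\<^sup>2))"
  have Rm: "R \<in> borel_measurable (past_sigma M Z (s - 1 - 1))"
  proof -
    have "(\<lambda>\<omega>. coeff x i * (ee (s - int i) \<omega>)\<^sup>2) \<in> borel_measurable (past_sigma M Z (s - 1 - 1))"
      if "i \<in> {2..p}" for i
      using meas_ee[of "s - int i" "s - 1 - 1"] that by simp
    moreover have "(\<lambda>\<omega>. coeff y j * (\<sigma> (s - int j) \<omega>)\<^sup>2) \<in> borel_measurable (past_sigma M Z (s - 1 - 1))"
      if "j \<in> {1..q}" for j
      using meas_sigma[of "s - int j" "s - 1 - 1"] that by simp
    ultimately show ?thesis unfolding R_def
      by (intro borel_measurable_add borel_measurable_sum borel_measurable_const) auto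
  qed
  have "AE \<omega> in M. (\<sigma> (s - 1) \<omega>)\<^sup>2 * phi (coeff x 1 * (1-\<gamma>)\<^sup>2) (coeff x 1 * (1+\<gamma>)\<^sup>2) (Z (s - 1) \<omega>) + R \<omega> = 0"
    using rel[unfolded Rel_def] AE_space
  proof eventually_elim
    case (elim \<omega>)
    have "(\<Sum>i=1..p. coeff x i * (ee (s - int i) \<omega>)\<^sup>2) = coeff x 1 * (ee (s - 1) \<omega>)\<^sup>2 + (\<Sum>i=2..p. coeff x i * (ee (s - int i) \<omega>)\<^sup>2)"
      using pq by (subst sum.atLeast_Suc_atMost) (auto simp: numeral_2_eq_2)
    also have "coeff x 1 * (ee (s - 1) \<omega>)\<^sup>2 = (\<sigma> (s - 1) \<omega>)\<^sup>2 * phi (coeff x 1 * (1-\<gamma>)\<^sup>2) (coeff x 1 * (1+\<gamma>)\<^sup>2) (Z (s - 1) \<omega>)"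
      using ee_sq[OF elim(2), of "s - 1"] by (simp add: phi_smult[symmetric])
    finally show ?case using elim(1) unfolding R_def by simp
  qed
  from master_here[OF _ this] Rm have "coeff x 1 * (1-\<gamma>)\<^sup>2 = 0" by simp
  then show ?thesis using \<gamma>2 by simp
qed

lemma step_rel:
  assumes rel: "Rel s c x y" and inv: "Inv x y"
  defines "x' \<equiv> pCons 0 (poly_shift 2 x) + smult (coeff y 1) (Apoly \<alpha> p)"
    and "y' \<equiv> pCons 0 (poly_shift 2 y) + smult (coeff y 1) (Apoly \<beta> q)"
  shows "Rel (s - 1) (c + coeff y 1 * \<alpha> 0) x' y' \<and> Inv x' y'
     \<and> Fp \<alpha> \<beta> p q x y = [:0,1:] * Fp \<alpha> \<beta> p q x' y'"
proof -
  have x1: "coeff x 1 = 0" by (rule step_x1[OF rel])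
  have x0: "coeff x 0 = 0" and xp: "\<forall>i>p. coeff x i = 0" and y0: "coeff y 0 = 0"
    and yq: "\<forall>j>q. coeff y j = 0" using inv by (auto simp: Inv_def)
  have cx': "coeff x' i = coeff x (Suc i) + coeff y 1 * (if 1 \<le> i \<and> i \<le> p then \<alpha> i else 0)"
    if "i \<ge> 1" for i
    using that unfolding x'_def
    by (cases i) (auto simp: coeff_poly_shift coeff_Apoly numeral_2_eq_2)
  have cy': "coeff y' j = coeff y (Suc j) + coeff y 1 * (if 1 \<le> j \<and> j \<le> q then \<beta> j else 0)"
    if "j \<ge> 1" for j
    using that unfolding y'_def
    by (cases j) (auto simp: coeff_poly_shift coeff_Apoly numeral_2_eq_2)
  have Inv': "Inv x' y'"
    unfolding Inv_def
  proof (intro conjI allI impI)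
    show "coeff x' 0 = 0" unfolding x'_def by (simp add: coeff_Apoly)
    show "coeff y' 0 = 0" unfolding y'_def by (simp add: coeff_Apoly)
    fix i assume "p < i" then show "coeff x' i = 0" using cx'[of i] xp pq by auto
  next
    fix j assume "q < j" then show "coeff y' j = 0" using cy'[of j] yq pq by auto
  qed
  have R': "Rel (s - 1) (c + coeff y 1 * \<alpha> 0) x' y'"
    unfolding Rel_def
    using rel[unfolded Rel_def] AE_space
  proof eventually_elim
    case (elim \<omega>)
    define E' where "E' = (\<lambda>i::nat. (ee (s - 1 - int i) \<omega>)\<^sup>2)"
    define S' where "S' = (\<lambda>j::nat. (\<sigma> (s - 1 - int j) \<omega>)\<^sup>2)"
    have sh: "s - (1 + int i) = s - 1 - int i" for i by simp
    have sumX: "(\<Sum>i=1..p. coeff x i * (ee (s - int i) \<omega>)\<^sup>2) = (\<Sum>i=1..p. coeff x (Suc i) * E' i)"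
      using sum_shift1[of "\<lambda>i. coeff x i * (ee (s - int i) \<omega>)\<^sup>2" p] x1 xp
      by (simp add: sh E'_def)
    have sumY: "(\<Sum>j=1..q. coeff y j * (\<sigma> (s - int j) \<omega>)\<^sup>2) = (\<Sum>j=1..q. coeff y (Suc j) * S' j) + coeff y 1 * (\<sigma> (s - 1) \<omega>)\<^sup>2"
      using sum_shift1[of "\<lambda>j. coeff y j * (\<sigma> (s - int j) \<omega>)\<^sup>2" q] yq
      by (simp add: sh S'_def)
    have rec: "(\<sigma> (s - 1) \<omega>)\<^sup>2 = \<alpha> 0 + (\<Sum>i=1..p. \<alpha> i * E' i) + (\<Sum>j=1..q. \<beta> j * S' j)"
      using recursion[OF elim(2), of "s - 1"] by (simp add: E'_def S'_def ee_def)
    have newX: "(\<Sum>i=1..p. coeff x' i * E' i) = (\<Sum>i=1..p. coeff x (Suc i) * E' i) + coeff y 1 * (\<Sum>i=1..p. \<alpha> i * E' i)"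
    proof -
      have "(\<Sum>i=1..p. coeff x' i * E' i) = (\<Sum>i=1..p. coeff x (Suc i) * E' i + coeff y 1 * (\<alpha> i * E' i))"
        by (intro sum.cong refl) (auto simp: cx' algebra_simps)
      then show ?thesis by (simp add: sum.distrib sum_distrib_left)
    qed
    have newY: "(\<Sum>j=1..q. coeff y' j * S' j) = (\<Sum>j=1..q. coeff y (Suc j) * S' j) + coeff y 1 * (\<Sum>j=1..q. \<beta> j * S' j)"
    proof -
      have "(\<Sum>j=1..q. coeff y' j * S' j) = (\<Sum>j=1..q. coeff y (Suc j) * S' j + coeff y 1 * (\<beta> j * S' j))"
        by (intro sum.cong refl) (auto simp: cy' algebra_simps)
      then show ?thesis by (simp add: sum.distrib sum_distrib_left)
    qed
    have "coeff y 1 * (\<sigma> (s - 1) \<omega>)\<^sup>2 = coeff y 1 * \<alpha> 0 + coeff y 1 * (\<Sum>i=1..p. \<alpha> i * E' i) + coeff y 1 * (\<Sum>j=1..q. \<beta> j * S' j)"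
      by (simp add: rec distrib_left)
    then have "c + coeff y 1 * \<alpha> 0 + (\<Sum>i=1..p. coeff x' i * E' i) + (\<Sum>j=1..q. coeff y' j * S' j) = 0"
      using elim(1) sumX sumY newX newY by linarith
    then show ?case by (simp add: E'_def S'_def)
  qed
  have id: "[:0,1:] * Fp \<alpha> \<beta> p q x' y' = Fp \<alpha> \<beta> p q x y"
    unfolding Fp_def
  proof (rule poly_ident[where k="coeff y 1"])
    show "[:0,1:] * x' = x + smult (coeff y 1) ([:0,1:] * Apoly \<alpha> p)"
      unfolding x'_def distrib_left shift2x[OF x0 x1] by simp
    show "[:0,1:] * y' = y - smult (coeff y 1) [:0,1:] + smult (coeff y 1) ([:0,1:] * Apoly \<beta> q)"
      unfolding y'_def distrib_left shift2y[OF y0] by simp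
  qed
  show ?thesis using R' Inv' id by simp
qed

lemma iter:
  assumes rel: "Rel s c x y" and inv: "Inv x y"
  shows "\<exists>c' x' y'. Rel (s - int n) c' x' y' \<and> Inv x' y' \<and> Fp \<alpha> \<beta> p q x y = [:0,1:] ^ n * Fp \<alpha> \<beta> p q x' y'"
proof (induction n)
  case 0
  then show ?case using rel inv by (intro exI[of _ c] exI[of _ x] exI[of _ y]) simp
next
  case (Suc n)
  then obtain c' x' y' where h: "Rel (s - int n) c' x' y'" "Inv x' y'" "Fp \<alpha> \<beta> p q x y = [:0,1:] ^ n * Fp \<alpha> \<beta> p q x' y'"
    by blast
  from step_rel[OF h(1) h(2)] obtain c'' x'' y'' where h2: "Rel (s - int n - 1) c'' x'' y''" "Inv x'' y''"
    "Fp \<alpha> \<beta> p q x' y' = [:0,1:] * Fp \<alpha> \<beta> p q x'' y''" by blast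
  have e: "s - int (Suc n) = s - int n - 1" by simp
  have rr: "Rel (s - int (Suc n)) c'' x'' y''" unfolding e by (rule h2(1))
  moreover have "Fp \<alpha> \<beta> p q x y = [:0,1:] ^ Suc n * Fp \<alpha> \<beta> p q x'' y''"
    by (simp only: h(3) h2(3) power_Suc2 mult.assoc)
  ultimately have "Rel (s - int (Suc n)) c'' x'' y'' \<and> Inv x'' y'' \<and> Fp \<alpha> \<beta> p q x y = [:0,1:] ^ Suc n * Fp \<alpha> \<beta> p q x'' y''"
    using h2(2) by blast
  then show ?case by blast
qed

lemma F_zero:
  assumes rel: "Rel s c x y" and inv: "Inv x y"
  shows "Fp \<alpha> \<beta> p q x y = 0"
proof (rule poly_eqI)
  fix k
  obtain c' x' y' where "Fp \<alpha> \<beta> p q x y = [:0,1:] ^ Suc k * Fp \<alpha> \<beta> p q x' y'"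
    using iter[OF rel inv, of "Suc k"] by blast
  also have "[:0,1:] ^ Suc k = (monom 1 (Suc k) :: real poly)" by (simp add: monom_altdef)
  finally show "coeff (Fp \<alpha> \<beta> p q x y) k = coeff 0 k" by (simp add: coeff_monom_mult)
qed

lemma final_zero:
  assumes coprime: "\<not> (\<exists>z::complex. (\<Sum>i=1..p. complex_of_real (\<alpha> i) * z ^ i) = 0
                              \<and> 1 - (\<Sum>j=1..q. complex_of_real (\<beta> j) * z ^ j) = 0)"
    and last: "(\<alpha> p, \<beta> q) \<noteq> (0, 0)"
    and rel: "Rel s c x y" and inv: "Inv x y"
  shows "c = 0 \<and> x = 0 \<and> y = 0"
proof -
  have "x = 0 \<and> y = 0"
    using poly_final[OF pq coprime last] F_zero[OF rel inv] inv unfolding Inv_def Fp_def by blast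
  moreover then have "AE \<omega> in M. c = 0" using rel unfolding Rel_def by simp
  ultimately show ?thesis by simp
qed

lemma first_step:
  assumes \<alpha>1: "\<alpha> 1 > 0"
    and rel: "AE \<omega> in M. \<xi> 0
        + (\<Sum>i=1..p. \<xi> i * (\<bar>X (1 - int i) \<omega>\<bar> - \<gamma> * X (1 - int i) \<omega>)\<^sup>2)
        + (\<Sum>j=1..q. \<xi> (p + j) * (\<sigma> (1 - int j) \<omega>)\<^sup>2)
        + \<xi> (p + q + 1) * (- 2 * (\<Sum>i=1..p. \<alpha> i * X (1 - int i) \<omega>
                                    * (\<bar>X (1 - int i) \<omega>\<bar> - \<gamma> * X (1 - int i) \<omega>))) = 0"
  shows "\<xi> (p + q + 1) = 0 \<and> Rel 1 (\<xi> 0) (Apoly \<xi> p) (Apoly (\<lambda>j. \<xi> (p + j)) q)"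
proof -
  define L where "L = \<xi> (p + q + 1)"
  define a where "a = \<xi> 1 * (1-\<gamma>)\<^sup>2 + (-2 * L * \<alpha> 1) * (1-\<gamma>)"
  define b where "b = \<xi> 1 * (1+\<gamma>)\<^sup>2 + (-2 * L * \<alpha> 1) * (-(1+\<gamma>))"
  define R where "R = (\<lambda>\<omega>. \<xi> 0 + (\<Sum>i=2..p. \<xi> i * (ee (1 - int i) \<omega>)\<^sup>2)
      + (\<Sum>j=1..q. \<xi> (p + j) * (\<sigma> (1 - int j) \<omega>)\<^sup>2)
      + L * (- 2 * (\<Sum>i=2..p. \<alpha> i * X (1 - int i) \<omega> * ee (1 - int i) \<omega>)))"
  have Rm: "R \<in> borel_measurable (past_sigma M Z (0 - 1))"
  proof -
    have "(\<lambda>\<omega>. \<xi> i * (ee (1 - int i) \<omega>)\<^sup>2) \<in> borel_measurable (past_sigma M Z (0 - 1))"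
      if "i \<in> {2..p}" for i
      using meas_ee[of "1 - int i" "0 - 1"] that by simp
    moreover have "(\<lambda>\<omega>. \<alpha> i * X (1 - int i) \<omega> * ee (1 - int i) \<omega>) \<in> borel_measurable (past_sigma M Z (0 - 1))"
      if "i \<in> {2..p}" for i
      using meas_ee[of "1 - int i" "0 - 1"] meas_X[of "1 - int i" "0 - 1"] that by simp
    moreover have "(\<lambda>\<omega>. \<xi> (p + j) * (\<sigma> (1 - int j) \<omega>)\<^sup>2) \<in> borel_measurable (past_sigma M Z (0 - 1))"
      if "j \<in> {1..q}" for j
      using meas_sigma[of "1 - int j" "0 - 1"] that by simp
    ultimately have m1: "(\<lambda>\<omega>. \<Sum>i=2..p. \<xi> i * (ee (1 - int i) \<omega>)\<^sup>2) \<in> borel_measurable (past_sigma M Z (0 - 1))"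
      and m2: "(\<lambda>\<omega>. \<Sum>j=1..q. \<xi> (p + j) * (\<sigma> (1 - int j) \<omega>)\<^sup>2) \<in> borel_measurable (past_sigma M Z (0 - 1))"
      and m3: "(\<lambda>\<omega>. \<Sum>i=2..p. \<alpha> i * X (1 - int i) \<omega> * ee (1 - int i) \<omega>) \<in> borel_measurable (past_sigma M Z (0 - 1))"
      by (auto intro!: borel_measurable_sum)
    show ?thesis unfolding R_def
      by (intro borel_measurable_add borel_measurable_times borel_measurable_const m1 m2 m3)
  qed
  have "AE \<omega> in M. (\<sigma> 0 \<omega>)\<^sup>2 * phi a b (Z 0 \<omega>) + R \<omega> = 0"
    using rel AE_space
  proof eventually_elim
    case (elim \<omega>)
    have s1: "(\<Sum>i=1..p. \<xi> i * (\<bar>X (1 - int i) \<omega>\<bar> - \<gamma> * X (1 - int i) \<omega>)\<^sup>2)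
        = \<xi> 1 * (ee 0 \<omega>)\<^sup>2 + (\<Sum>i=2..p. \<xi> i * (ee (1 - int i) \<omega>)\<^sup>2)"
      using pq by (subst sum.atLeast_Suc_atMost) (auto simp: numeral_2_eq_2 ee_def)
    have s2: "(\<Sum>i=1..p. \<alpha> i * X (1 - int i) \<omega> * (\<bar>X (1 - int i) \<omega>\<bar> - \<gamma> * X (1 - int i) \<omega>))
        = \<alpha> 1 * (X 0 \<omega> * ee 0 \<omega>) + (\<Sum>i=2..p. \<alpha> i * X (1 - int i) \<omega> * ee (1 - int i) \<omega>)"
      using pq by (subst sum.atLeast_Suc_atMost) (auto simp: numeral_2_eq_2 ee_def)
    have "\<xi> 1 * (ee 0 \<omega>)\<^sup>2 + L * (-2 * (\<alpha> 1 * (X 0 \<omega> * ee 0 \<omega>)))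
        = (\<sigma> 0 \<omega>)\<^sup>2 * (\<xi> 1 * phi ((1-\<gamma>)\<^sup>2) ((1+\<gamma>)\<^sup>2) (Z 0 \<omega>) + (-2 * L * \<alpha> 1) * phi (1-\<gamma>) (-(1+\<gamma>)) (Z 0 \<omega>))"
      using ee_sq[OF elim(2), of 0] X_ee[OF elim(2), of 0] by (simp add: algebra_simps)
    also have "\<dots> = (\<sigma> 0 \<omega>)\<^sup>2 * phi a b (Z 0 \<omega>)"
      unfolding a_def b_def phi_smult phi_add by simp
    finally have "\<xi> 1 * (ee 0 \<omega>)\<^sup>2 + L * (-2 * (\<alpha> 1 * (X 0 \<omega> * ee 0 \<omega>))) = (\<sigma> 0 \<omega>)\<^sup>2 * phi a b (Z 0 \<omega>)" .
    then show ?case using elim(1) s1 s2 unfolding R_def L_def[symmetric] by (simp add: algebra_simps)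
  qed
  from master_here[OF Rm this] have ab: "a = 0" "b = 0" by auto
  have g1: "1 - \<gamma> \<noteq> 0" "1 + \<gamma> \<noteq> 0" using \<gamma>1 \<gamma>2 by auto
  have "a = (1 - \<gamma>) * (\<xi> 1 * (1 - \<gamma>) - 2 * L * \<alpha> 1)" unfolding a_def by (simp add: power2_eq_square algebra_simps)
  then have h1: "\<xi> 1 * (1 - \<gamma>) = 2 * L * \<alpha> 1" using ab g1 by simp
  have "b = (1 + \<gamma>) * (\<xi> 1 * (1 + \<gamma>) + 2 * L * \<alpha> 1)" unfolding b_def by (simp add: power2_eq_square algebra_simps)
  then have h2: "\<xi> 1 * (1 + \<gamma>) = - 2 * L * \<alpha> 1" using ab g1 by simp
  have "\<xi> 1 * (1 - \<gamma>) + \<xi> 1 * (1 + \<gamma>) = 2 * \<xi> 1" by (simp add: algebra_simps)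
  then have x1: "\<xi> 1 = 0" using h1 h2 by simp
  then have "L * \<alpha> 1 = 0" using h1 by simp
  then have L0: "L = 0" using \<alpha>1 by simp
  have "Rel 1 (\<xi> 0) (Apoly \<xi> p) (Apoly (\<lambda>j. \<xi> (p + j)) q)"
    unfolding Rel_def using rel
  proof eventually_elim
    case (elim \<omega>)
    have "(\<Sum>i=1..p. coeff (Apoly \<xi> p) i * (ee (1 - int i) \<omega>)\<^sup>2) = (\<Sum>i=1..p. \<xi> i * (\<bar>X (1 - int i) \<omega>\<bar> - \<gamma> * X (1 - int i) \<omega>)\<^sup>2)"
      by (intro sum.cong refl) (auto simp: coeff_Apoly ee_def)
    moreover have "(\<Sum>j=1..q. coeff (Apoly (\<lambda>j. \<xi> (p + j)) q) j * (\<sigma> (1 - int j) \<omega>)\<^sup>2) = (\<Sum>j=1..q. \<xi> (p + j) * (\<sigma> (1 - int j) \<omega>)\<^sup>2)"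
      by (intro sum.cong refl) (auto simp: coeff_Apoly)
    ultimately show ?case using elim L0 unfolding L_def by simp
  qed
  then show ?thesis using L0 unfolding L_def by simp
qed

lemma Inv_Apoly: "Inv (Apoly \<xi> p) (Apoly (\<lambda>j. \<xi> (p + j)) q)"
  unfolding Inv_def by (simp add: coeff_Apoly)

end

lemma interior_perturb:
  fixes \<theta> :: "nat \<Rightarrow> real"
  assumes int: "\<theta> \<in> top_of_set (coord_space d) interior_of K"
    and C: "\<theta> \<in> coord_space d" and k: "k < d"
  shows "\<exists>\<epsilon>>0. \<forall>t. \<bar>t\<bar> < \<epsilon> \<longrightarrow> \<theta>(k := \<theta> k + t) \<in> K"
proof -
  obtain U where U: "openin (top_of_set (coord_space d)) U" "\<theta> \<in> U" "U \<subseteq> K"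
    using int unfolding interior_of_def by blast
  then obtain V where V: "open V" "U = coord_space d \<inter> V" by (auto simp: openin_open)
  define f where "f = (\<lambda>t::real. \<theta>(k := \<theta> k + t))"
  have cf: "continuous_on UNIV f"
    unfolding f_def
  proof (intro continuous_on_coordinatewise_then_product)
    fix i show "continuous_on UNIV (\<lambda>t. (\<theta>(k := \<theta> k + t)) i)"
      by (cases "i = k") (simp_all add: continuous_on_add continuous_on_const continuous_on_id)
  qed
  have o: "open (f -` V)" by (rule open_vimage[OF V(1) cf])
  have "0 \<in> f -` V" using U V unfolding f_def by auto
  then obtain \<epsilon> where e: "\<epsilon> > 0" "ball 0 \<epsilon> \<subseteq> f -` V" using o open_contains_ball by blast
  have "\<theta>(k := \<theta> k + t) \<in> K" if t: "\<bar>t\<bar> < \<epsilon>" for t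
  proof -
    have "f t \<in> V" using e t by (auto simp: dist_real_def)
    moreover have "f t \<in> coord_space d" using C k unfolding f_def coord_space_def by auto
    ultimately show ?thesis using U V unfolding f_def by auto
  qed
  then show ?thesis using e by blast
qed

lemma param_D:
  assumes "\<theta> \<in> AGARCH_param_set p q"
  shows "\<theta> \<in> coord_space (p+q+2) \<and> \<theta> 0 > 0 \<and> (\<forall>i\<in>{1..p}. \<theta> i \<ge> 0)
    \<and> (\<forall>j\<in>{1..q}. 0 \<le> \<theta> (p + j) \<and> \<theta> (p + j) < 1) \<and> -1 \<le> \<theta> (p+q+1) \<and> \<theta> (p+q+1) \<le> 1"
  using assms unfolding AGARCH_param_set_def mem_Collect_eq by (elim conjE) (intro conjI)

lemma pv:
  shows "param_vec p q \<alpha> \<beta> \<gamma> 0 = \<alpha> 0"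
   "i \<le> p \<Longrightarrow> param_vec p q \<alpha> \<beta> \<gamma> i = \<alpha> i"
   "1 \<le> j \<Longrightarrow> j \<le> q \<Longrightarrow> param_vec p q \<alpha> \<beta> \<gamma> (p + j) = \<beta> j"
   "param_vec p q \<alpha> \<beta> \<gamma> (p + q + 1) = \<gamma>"
  unfolding param_vec_def by auto

theorem lemma8p2:
  fixes M :: "'a measure"
    and Z X \<sigma> :: "int \<Rightarrow> 'a \<Rightarrow> real"
    and p q :: nat
    and \<alpha> \<beta> :: "nat \<Rightarrow> real" and \<gamma> :: real
    and K :: "(nat \<Rightarrow> real) set"
  assumes prob: "prob_space M"
    (* innovations: i.i.d., mean 0, variance 1 *)
    and Z_meas: "\<And>t. Z t \<in> borel_measurable M"
    and Z_indep: "prob_space.indep_vars M (\<lambda>_. borel) Z UNIV"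
    and Z_ident: "\<And>t. distr M borel (Z t) = distr M borel (Z 0)"
    and Z_int: "integrable M (Z 0)" and Z_mean: "(\<integral>\<omega>. Z 0 \<omega> \<partial>M) = 0"
    and Z_int2: "integrable M (\<lambda>\<omega>. (Z 0 \<omega>)\<^sup>2)" and Z_var: "(\<integral>\<omega>. (Z 0 \<omega>)\<^sup>2 \<partial>M) = 1"
    (* AGARCH(p,q) equations *)
    and pq: "p \<ge> 1" "q \<ge> 1"
    and \<sigma>_nonneg: "\<And>t \<omega>. \<omega> \<in> space M \<Longrightarrow> \<sigma> t \<omega> \<ge> 0"
    and \<sigma>_adapted: "\<And>t. \<sigma> t \<in> borel_measurable (past_sigma M Z (t - 1))"
    and X_def: "\<And>t \<omega>. \<omega> \<in> space M \<Longrightarrow> X t \<omega> = \<sigma> t \<omega> * Z t \<omega>"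
    and recursion: "\<And>t \<omega>. \<omega> \<in> space M \<Longrightarrow>
        (\<sigma> t \<omega>)\<^sup>2 = \<alpha> 0 + (\<Sum>i=1..p. \<alpha> i * (\<bar>X (t - int i) \<omega>\<bar> - \<gamma> * X (t - int i) \<omega>)\<^sup>2)
                     + (\<Sum>j=1..q. \<beta> j * (\<sigma> (t - int j) \<omega>)\<^sup>2)"
    and stationary: "strictly_stationary M (\<lambda>t \<omega>. (X t \<omega>, \<sigma> t \<omega>))"
    (* parameter space *)
    and K_sub: "K \<subseteq> AGARCH_param_set p q"
    and K_compact: "compact K"
    and K_reg: "top_of_set (coord_space (p + q + 2)) closure_of
                  (top_of_set (coord_space (p + q + 2)) interior_of K) = K"
    and \<theta>0_int: "param_vec p q \<alpha> \<beta> \<gamma> \<in> top_of_set (coord_space (p + q + 2)) interior_of K"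
    (* further conditions *)
    and \<alpha>_pos: "\<exists>i\<in>{1..p}. \<alpha> i > 0"
    and \<alpha>\<beta>_last: "(\<alpha> p, \<beta> q) \<noteq> (0, 0)"
    and coprime: "\<not> (\<exists>z::complex. (\<Sum>i=1..p. complex_of_real (\<alpha> i) * z ^ i) = 0
                              \<and> 1 - (\<Sum>j=1..q. complex_of_real (\<beta> j) * z ^ j) = 0)"
    and not_two_points: "\<not> (\<exists>a b. measure M {\<omega> \<in> space M. Z 0 \<omega> = a \<or> Z 0 \<omega> = b} = 1)"
    and Z_int4: "integrable M (\<lambda>\<omega>. (Z 0 \<omega>) ^ 4)"
    and small_ball: "\<exists>\<mu>>0. (\<lambda>z. measure M {\<omega> \<in> space M. \<bar>Z 0 \<omega>\<bar> \<le> z}) \<in> o[at_right 0](\<lambda>z. z powr \<mu>)"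
  shows "\<forall>\<xi> :: nat \<Rightarrow> real.
    (AE \<omega> in M. \<xi> 0
        + (\<Sum>i=1..p. \<xi> i * (\<bar>X (1 - int i) \<omega>\<bar> - \<gamma> * X (1 - int i) \<omega>)\<^sup>2)
        + (\<Sum>j=1..q. \<xi> (p + j) * (\<sigma> (1 - int j) \<omega>)\<^sup>2)
        + \<xi> (p + q + 1) * (- 2 * (\<Sum>i=1..p. \<alpha> i * X (1 - int i) \<omega>
                                    * (\<bar>X (1 - int i) \<omega>\<bar> - \<gamma> * X (1 - int i) \<omega>))) = 0)
    \<longrightarrow> (\<forall>i < p + q + 2. \<xi> i = 0)"
proof -
  define \<theta> where "\<theta> = param_vec p q \<alpha> \<beta> \<gamma>"
  have \<theta>K: "\<theta> \<in> K" using subsetD[OF interior_of_subset \<theta>0_int] unfolding \<theta>_def .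
  have \<theta>P: "\<theta> \<in> AGARCH_param_set p q" using subsetD[OF K_sub \<theta>K] .
  note PD = param_D[OF \<theta>P]
  have \<theta>C: "\<theta> \<in> coord_space (p + q + 2)" using PD by (elim conjE)
  have P1: "\<theta> 0 > 0" using PD by (elim conjE)
  have P2: "\<forall>i\<in>{1..p}. \<theta> i \<ge> 0" using PD by (elim conjE)
  have P3: "\<forall>j\<in>{1..q}. 0 \<le> \<theta> (p + j) \<and> \<theta> (p + j) < 1" using PD by (elim conjE)
  have \<theta>0: "\<theta> 0 = \<alpha> 0" unfolding \<theta>_def by (rule pv(1))
  have \<theta>i: "\<theta> i = \<alpha> i" if "i \<le> p" for i unfolding \<theta>_def by (rule pv(2)[OF that])
  have \<theta>j: "\<theta> (p + j) = \<beta> j" if "1 \<le> j" "j \<le> q" for j unfolding \<theta>_def by (rule pv(3)[OF that])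
  have \<theta>g: "\<theta> (p + q + 1) = \<gamma>" unfolding \<theta>_def by (rule pv(4))
  have a0: "\<alpha> 0 > 0" using P1 \<theta>0 by simp
  have ann: "\<alpha> i \<ge> 0" if "1 \<le> i" "i \<le> p" for i
  proof -
    have "i \<in> {1..p}" using that by simp
    then have "\<theta> i \<ge> 0" using P2 by blast
    then show ?thesis using \<theta>i[of i] that by simp
  qed
  have bnn: "\<beta> j \<ge> 0" if "1 \<le> j" "j \<le> q" for j
  proof -
    have "j \<in> {1..q}" using that by simp
    then have "\<theta> (p + j) \<ge> 0" using P3 by blast
    then show ?thesis using \<theta>j[of j] that by simp
  qed
  have int': "\<theta> \<in> top_of_set (coord_space (p + q + 2)) interior_of K" using \<theta>0_int unfolding \<theta>_def .
  obtain e1 where e1: "e1 > 0" "\<And>t. \<bar>t\<bar> < e1 \<Longrightarrow> \<theta>(p + q + 1 := \<theta> (p + q + 1) + t) \<in> K"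
    using interior_perturb[OF int' \<theta>C, of "p + q + 1"] by auto
  have "\<theta>(p + q + 1 := \<theta> (p + q + 1) + e1/2) \<in> K" by (rule e1(2)) (use e1(1) in simp)
  then have "\<theta>(p + q + 1 := \<theta> (p + q + 1) + e1/2) \<in> AGARCH_param_set p q" using K_sub by blast
  then have "(\<theta>(p + q + 1 := \<theta> (p + q + 1) + e1/2)) (p + q + 1) \<le> 1" by (blast dest: param_D)
  then have g2: "\<gamma> < 1" using e1(1) \<theta>g by simp
  have "\<theta>(p + q + 1 := \<theta> (p + q + 1) + (- e1/2)) \<in> K" by (rule e1(2)) (use e1(1) in simp)
  then have "\<theta>(p + q + 1 := \<theta> (p + q + 1) + (- e1/2)) \<in> AGARCH_param_set p q" using K_sub by blast
  then have "-1 \<le> (\<theta>(p + q + 1 := \<theta> (p + q + 1) + (- e1/2))) (p + q + 1)" by (blast dest: param_D)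
  then have g1: "-1 < \<gamma>" using e1(1) \<theta>g by simp
  obtain e2 where e2: "e2 > 0" "\<And>t. \<bar>t\<bar> < e2 \<Longrightarrow> \<theta>(1 := \<theta> 1 + t) \<in> K"
    using interior_perturb[OF int' \<theta>C, of 1] by auto
  have "\<theta>(1 := \<theta> 1 + (- e2/2)) \<in> K" by (rule e2(2)) (use e2(1) in simp)
  then have "\<theta>(1 := \<theta> 1 + (- e2/2)) \<in> AGARCH_param_set p q" using K_sub by blast
  then have "\<forall>i\<in>{1..p}. (\<theta>(1 := \<theta> 1 + (- e2/2))) i \<ge> 0" by (blast dest: param_D)
  moreover have "(1::nat) \<in> {1..p}" using pq by simp
  ultimately have "(\<theta>(1 := \<theta> 1 + (- e2/2))) 1 \<ge> 0" by blast
  then have "\<theta> 1 - e2/2 \<ge> 0" by simp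
  then have a1: "\<alpha> 1 > 0" using e2(1) \<theta>i[of 1] pq by auto
  interpret agarch M Z X \<sigma> p q \<alpha> \<beta> \<gamma>
    by (intro agarch.intro[OF prob] agarch_axioms.intro; (fact prob Z_meas Z_indep Z_ident Z_int Z_mean Z_int2 Z_var not_two_points pq
        \<sigma>_nonneg \<sigma>_adapted X_def recursion a0 ann bnn g1 g2)?)
  show ?thesis
  proof (intro allI impI)
    fix \<xi> :: "nat \<Rightarrow> real" and i :: nat
    assume rel: "AE \<omega> in M. \<xi> 0
        + (\<Sum>i=1..p. \<xi> i * (\<bar>X (1 - int i) \<omega>\<bar> - \<gamma> * X (1 - int i) \<omega>)\<^sup>2)
        + (\<Sum>j=1..q. \<xi> (p + j) * (\<sigma> (1 - int j) \<omega>)\<^sup>2)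
        + \<xi> (p + q + 1) * (- 2 * (\<Sum>i=1..p. \<alpha> i * X (1 - int i) \<omega>
                                    * (\<bar>X (1 - int i) \<omega>\<bar> - \<gamma> * X (1 - int i) \<omega>))) = 0"
      and ilt: "i < p + q + 2"
    from first_step[OF a1 rel] have L: "\<xi> (p + q + 1) = 0"
      and R: "Rel 1 (\<xi> 0) (Apoly \<xi> p) (Apoly (\<lambda>j. \<xi> (p + j)) q)" by auto
    from final_zero[OF coprime \<alpha>\<beta>_last R Inv_Apoly]
    have z: "\<xi> 0 = 0" "Apoly \<xi> p = 0" "Apoly (\<lambda>j. \<xi> (p + j)) q = 0" by auto
    show "\<xi> i = 0"
    proof -
      consider "i = 0" | "1 \<le> i \<and> i \<le> p" | "p < i \<and> i \<le> p + q" | "i = p + q + 1"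
        using ilt by linarith
      then show ?thesis
      proof cases
        case 1 then show ?thesis using z by simp
      next
        case 2
        have "coeff (Apoly \<xi> p) i = 0" using z by simp
        then show ?thesis using 2 by (simp add: coeff_Apoly)
      next
        case 3
        have "coeff (Apoly (\<lambda>j. \<xi> (p + j)) q) (i - p) = 0" using z by simp
        moreover have "p + (i - p) = i" using 3 by simp
        ultimately show ?thesis using 3 by (simp add: coeff_Apoly)
      next
        case 4 then show ?thesis using L by simp
      qed
    qed
  qed
qed

end
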